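(* Let $k\ge2$ and $r\ge1$. Let $X$ be a mixed-stable sequence with respect to the $(k,r)$-tree $T_r$ that is a whole multiple of its atomic sequence. Then there is a BST $T'$ on the keys of $T_r$ such that the average promotion of $T_r$ to $T'$ with respect to $X$ is strictly larger than $k(1-\alpha^r)$, where $\alpha=1-3^{-k}$. If $X$ is strongly-stable, then there is a BST $T'$ on the keys of $T_r$ such that the average promotion of $T_r$ to $T'$ equals $(k+1)(1-\alpha^r)+\delta$, where $\alpha=1-2^{-k}$ and $0\le\delta<\alpha^r$.
   Context: $(k,r)$-trees. Let $k\ge2$ and $r\ge0$ be integers. $T_0$ is a single node. For $r\ge1$, $T_r$ has $k$ trunk nodes $w_1,\dots,w_k$: $w_1$ is the root, $w_2$ is the right child of $w_1$, and $w_{j+1}$ is the left child of $w_j$ for $2\le j\le k-1$. The left child of $w_k$ is a single leaf (the actual leaf). Each of the remaining $k$ child positions of trunk nodes (the left child of $w_1$ and the right child of $w_j$ for $2\le j\le k$) is the root of a copy of $T_{r-1}$. Keys are $1,\dots,|T_r|$ in symmetric order. Stable sequences. Let $T$ be a full binary search tree (every inner node has exactly two children), and let $X$ be a query sequence consisting only of keys stored at leaves of $T$. For an inner node $v$, let $X_v$ be the subsequence of $X$ consisting of the queries to keys in the subtree of $v$. - The node $v$ is strongly-stable if consecutive queries of $X_v$ alternate between the left and right subtrees of $v$. - The node $v$ is weakly-stable with a left bias if its left child $u$ is an inner node and $X_v$ repeats cyclically (from some starting phase) the pattern: a query in the left subtree of $u$, then one in the right subtree of $u$, then one in the right subtree of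 $v$. - Weakly-stable with a right bias is the mirror image: $u$ is the right child of $v$, and the pattern is right subtree of $u$, left subtree of $u$, left subtree of $v$. In both weakly-stable cases $u$ is called the favored child of $v$. $X$ (and $T$) is mixed-stable if every inner node of $T$ is strongly-stable or weakly-stable, and strongly-stable if every inner node is strongly-stable. The atomic sequence is the shortest such stable sequence all of whose repetitions are again such stable sequences. $X$ is a whole multiple of it if it is a concatenation of copies of it. For such $X$, $f(x)$ is the fraction of queries equal to $x$. Promotion. For BSTs $T,T'$ on the same keys and such $X$, the average promotion of $T$ to $T'$ is $\sum_x f(x)\,(d_T(x)-d_{T'}(x))$, where $d_T(x)$ is the number of edges from the root of $T$ to $x$. *)

theory Defs
  imports Complex_Main "HOL-Library.Tree"
begin

text \<open>Shape of the trunk below w_1: trunk m s builds w_2 ... w_k when m = k - 1;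
  trunk 0 s is the single actual leaf (left child of w_k); every trunk node has s
  (a copy of T_(r-1)) as right child.\<close>
fun trunk :: "nat \<Rightarrow> unit tree \<Rightarrow> unit tree" where
  "trunk 0 s = Node Leaf () Leaf"
| "trunk (Suc m) s = Node (trunk m s) () s"

fun kr_shape :: "nat \<Rightarrow> nat \<Rightarrow> unit tree" where
  "kr_shape k 0 = Node Leaf () Leaf"
| "kr_shape k (Suc r) = Node (kr_shape k r) () (trunk (k - 1) (kr_shape k r))"

fun label :: "nat \<Rightarrow> 'a tree \<Rightarrow> nat tree" where
  "label n Leaf = Leaf"
| "label n (Node l _ r) = Node (label n l) (n + size l) (label (n + size l + 1) r)"

definition kr_tree :: "nat \<Rightarrow> nat \<Rightarrow> nat tree" where
  "kr_tree k r = label 1 (kr_shape k r)"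

fun leaf_keys :: "'a tree \<Rightarrow> 'a set" where
  "leaf_keys Leaf = {}"
| "leaf_keys (Node l a r) = (if l = Leaf \<and> r = Leaf then {a} else leaf_keys l \<union> leaf_keys r)"

definition inner :: "'a tree \<Rightarrow> bool" where
  "inner t \<longleftrightarrow> t \<noteq> Leaf \<and> (left t \<noteq> Leaf \<or> right t \<noteq> Leaf)"

fun depth :: "'a::linorder tree \<Rightarrow> 'a \<Rightarrow> nat" where
  "depth Leaf x = 0"
| "depth (Node l a r) x =
     (if x = a then 0 else if x < a then Suc (depth l x) else Suc (depth r x))"

definition subseq_at :: "'a tree \<Rightarrow> 'a list \<Rightarrow> 'a list" where
  "subseq_at v X = filter (\<lambda>x. x \<in> set_tree v) X"

definition strongly_stable_node :: "'a tree \<Rightarrow> 'a list \<Rightarrow> bool" where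
  "strongly_stable_node v X \<longleftrightarrow>
     (let Xv = subseq_at v X in
      \<forall>i. Suc i < length Xv \<longrightarrow>
        (Xv ! i \<in> set_tree (left v) \<and> Xv ! Suc i \<in> set_tree (right v)) \<or>
        (Xv ! i \<in> set_tree (right v) \<and> Xv ! Suc i \<in> set_tree (left v)))"

definition cyclic3 :: "'a list \<Rightarrow> 'a set \<Rightarrow> 'a set \<Rightarrow> 'a set \<Rightarrow> bool" where
  "cyclic3 Xs A0 A1 A2 \<longleftrightarrow>
     (\<exists>p. \<forall>i < length Xs. Xs ! i \<in> [A0, A1, A2] ! ((i + p) mod 3))"

definition weakly_stable_left_node :: "'a tree \<Rightarrow> 'a list \<Rightarrow> bool" where
  "weakly_stable_left_node v X \<longleftrightarrow>
     inner (left v) \<and>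
     cyclic3 (subseq_at v X) (set_tree (left (left v))) (set_tree (right (left v)))
       (set_tree (right v))"

definition weakly_stable_right_node :: "'a tree \<Rightarrow> 'a list \<Rightarrow> bool" where
  "weakly_stable_right_node v X \<longleftrightarrow>
     inner (right v) \<and>
     cyclic3 (subseq_at v X) (set_tree (right (right v))) (set_tree (left (right v)))
       (set_tree (left v))"

definition weakly_stable_node :: "'a tree \<Rightarrow> 'a list \<Rightarrow> bool" where
  "weakly_stable_node v X \<longleftrightarrow> weakly_stable_left_node v X \<or> weakly_stable_right_node v X"

definition mixed_stable :: "'a tree \<Rightarrow> 'a list \<Rightarrow> bool" where
  "mixed_stable T X \<longleftrightarrow> set X \<subseteq> leaf_keys T \<and>
     (\<forall>v \<in> subtrees T. inner v \<longrightarrow> strongly_stable_node v X \<or> weakly_stable_node v X)"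

definition strongly_stable :: "'a tree \<Rightarrow> 'a list \<Rightarrow> bool" where
  "strongly_stable T X \<longleftrightarrow> set X \<subseteq> leaf_keys T \<and>
     (\<forall>v \<in> subtrees T. inner v \<longrightarrow> strongly_stable_node v X)"

abbreviation rep :: "nat \<Rightarrow> 'a list \<Rightarrow> 'a list" where
  "rep m A \<equiv> concat (replicate m A)"

definition is_atomic :: "('a list \<Rightarrow> bool) \<Rightarrow> 'a list \<Rightarrow> 'a list \<Rightarrow> bool" where
  "is_atomic P X A \<longleftrightarrow>
     A \<noteq> [] \<and> (\<forall>j\<ge>1. P (rep j A)) \<and> (\<exists>j. (\<exists>Y. X @ Y = rep j A)) \<and>
     (\<forall>B. B \<noteq> [] \<and> (\<forall>j\<ge>1. P (rep j B)) \<and> (\<exists>j. (\<exists>Y. X @ Y = rep j B))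
          \<longrightarrow> length A \<le> length B)"

definition whole_multiple_of_atomic :: "('a list \<Rightarrow> bool) \<Rightarrow> 'a list \<Rightarrow> bool" where
  "whole_multiple_of_atomic P X \<longleftrightarrow>
     (\<exists>A m. m \<ge> 1 \<and> is_atomic P X A \<and> X = rep m A)"

definition freq :: "'a list \<Rightarrow> 'a \<Rightarrow> real" where
  "freq X x = real (count_list X x) / real (length X)"

definition avg_promotion :: "'a::linorder tree \<Rightarrow> 'a tree \<Rightarrow> 'a list \<Rightarrow> real" where
  "avg_promotion T T' X =
     (\<Sum>x \<in> set_tree T. freq X x * (real (depth T x) - real (depth T' x)))"

end

theory Submission
  imports Defs
begin


fun Wt :: "(nat \<Rightarrow> nat) \<Rightarrow> nat tree \<Rightarrow> nat" where
  "Wt c Leaf = 0"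
| "Wt c (Node l a r) = Wt c l + c a + Wt c r"

fun Dt :: "(nat \<Rightarrow> nat) \<Rightarrow> nat tree \<Rightarrow> nat" where
  "Dt c Leaf = 0"
| "Dt c (Node l a r) = Dt c l + Wt c l + Dt c r + Wt c r"

lemma Wt_inorder: "Wt c t = sum_list (map c (inorder t))"
  by (induction t) auto

lemma Wt_sum: "bst t \<Longrightarrow> Wt c t = (\<Sum>x\<in>set_tree t. c x)"
proof (induction t)
  case Leaf thus ?case by simp
next
  case (Node l a r)
  have d1: "set_tree l \<inter> set_tree r = {}" "a \<notin> set_tree l" "a \<notin> set_tree r"
    using Node.prems by fastforce+
  have "set_tree (Node l a r) = insert a (set_tree l \<union> set_tree r)" by simp
  hence "(\<Sum>x\<in>set_tree (Node l a r). c x) = c a + ((\<Sum>x\<in>set_tree l. c x) + (\<Sum>x\<in>set_tree r. c x))"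
    using d1 by (simp add: sum.union_disjoint)
  thus ?case using Node by simp
qed

lemma Dt_sum: "bst t \<Longrightarrow> Dt c t = (\<Sum>x\<in>set_tree t. c x * depth t x)"
proof (induction t)
  case Leaf thus ?case by simp
next
  case (Node l a r)
  have d1: "set_tree l \<inter> set_tree r = {}" "a \<notin> set_tree l" "a \<notin> set_tree r"
    using Node.prems by fastforce+
  let ?t = "Node l a r"
  have "(\<Sum>x\<in>set_tree ?t. c x * depth ?t x) = c a * depth ?t a + ((\<Sum>x\<in>set_tree l. c x * depth ?t x) + (\<Sum>x\<in>set_tree r. c x * depth ?t x))"
    using d1 by (simp add: sum.union_disjoint del: depth.simps)
  also have "(\<Sum>x\<in>set_tree l. c x * depth ?t x) = (\<Sum>x\<in>set_tree l. c x * depth l x + c x)"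
    using Node.prems by (intro sum.cong) auto
  also have "(\<Sum>x\<in>set_tree r. c x * depth ?t x) = (\<Sum>x\<in>set_tree r. c x * depth r x + c x)"
    using Node.prems by (intro sum.cong) auto
  finally show ?case using Node Wt_sum[of l c] Wt_sum[of r c] by (simp add: sum.distrib)
qed

fun hangR :: "'a tree \<Rightarrow> 'a \<Rightarrow> 'a tree" where
  "hangR Leaf x = Node Leaf x Leaf"
| "hangR (Node l a r) x = Node l a (hangR r x)"

fun hangL :: "'a \<Rightarrow> 'a tree \<Rightarrow> 'a tree" where
  "hangL x Leaf = Node Leaf x Leaf"
| "hangL x (Node l a r) = Node (hangL x l) a r"

lemma inorder_hangR[simp]: "inorder (hangR t x) = inorder t @ [x]"
  by (induction t) auto
lemma inorder_hangL[simp]: "inorder (hangL x t) = x # inorder t"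
  by (induction t) auto

lemma Dt_hangR: "c x = 0 \<Longrightarrow> Dt c (hangR t x) = Dt c t"
  by (induction t) (auto simp: Wt_inorder)
lemma Dt_hangL: "c x = 0 \<Longrightarrow> Dt c (hangL x t) = Dt c t"
  by (induction t) (auto simp: Wt_inorder)

lemma inorder_label: "inorder (label n t) = [n..<n + size t]"
proof (induction t arbitrary: n)
  case Leaf thus ?case by simp
next
  case (Node l a r)
  have "[n..<n + size l + (1 + size r)] = [n..<n+size l] @ [n + size l..<n + size l + (1 + size r)]"
    by (rule upt_add_eq_append) simp
  also have "[n + size l..<n + size l + (1 + size r)] = (n + size l) # [n + size l + 1..<n + size l + 1 + size r]"
    by (subst upt_conv_Cons) auto
  finally show ?case using Node by (simp add: add.assoc)
qed


definition T :: "nat \<Rightarrow> nat \<Rightarrow> nat \<Rightarrow> nat tree" where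
  "T k r n = label n (kr_shape k r)"
definition Tr :: "nat \<Rightarrow> nat \<Rightarrow> nat \<Rightarrow> nat \<Rightarrow> nat tree" where
  "Tr k r m n = label n (trunk m (kr_shape k r))"

lemma size_trunk: "size (trunk m s) = m * (size s + 1) + 1"
  by (induction m) auto

lemma T_Suc: "T k (Suc r) n = Node (T k r n) (n + size (kr_shape k r))
   (Tr k r (k-1) (n + size (kr_shape k r) + 1))"
  by (simp add: T_def Tr_def)
lemma T_0: "T k 0 n = Node Leaf n Leaf"
  by (simp add: T_def)
lemma Tr_0: "Tr k r 0 n = Node Leaf n Leaf"
  by (simp add: Tr_def)
lemma Tr_Suc: "Tr k r (Suc m) n = Node (Tr k r m n) (n + m * (size (kr_shape k r) + 1) + 1)
   (T k r (n + m * (size (kr_shape k r) + 1) + 2))"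
  by (simp add: T_def Tr_def size_trunk)

lemma inorder_T: "inorder (T k r n) = [n..<n + size (kr_shape k r)]"
  by (simp add: T_def inorder_label)
lemma inorder_Tr: "inorder (Tr k r m n) = [n..<n + m * (size (kr_shape k r) + 1) + 1]"
  by (simp add: Tr_def inorder_label size_trunk)

lemma upt_split: "i \<le> j \<Longrightarrow> j \<le> l \<Longrightarrow> [i..<j] @ [j..<l] = [i..<l]"
  using upt_add_eq_append[of i j "l - j"] by simp

fun optTr :: "(nat \<Rightarrow> nat tree) \<Rightarrow> nat \<Rightarrow> nat \<Rightarrow> nat \<Rightarrow> nat tree" where
  "optTr f s 0 n = Leaf"
| "optTr f s (Suc 0) n = hangL (n+1) (f (n+2))"
| "optTr f s (Suc (Suc m)) n =
     Node (optTr f s (Suc m) n) (n + Suc m * (s+1) + 1) (f (n + Suc m * (s+1) + 2))"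

primrec opt :: "nat \<Rightarrow> nat \<Rightarrow> nat \<Rightarrow> nat tree" where
  "opt k 0 n = Node Leaf n Leaf"
| "opt k (Suc r) n = Node (hangR (opt k r n) (n + size (kr_shape k r)))
      (n + size (kr_shape k r) + 1)
      (optTr (opt k r) (size (kr_shape k r)) (k-1) (n + size (kr_shape k r) + 1))"

lemma inorder_optTr:
  assumes "\<And>j. inorder (f j) = [j..<j+s]"
  shows "inorder (optTr f s (Suc m) n) = [n+1..<n + Suc m * (s+1) + 1]"
proof (induction m)
  case 0 thus ?case using assms by (simp add: upt_conv_Cons)
next
  case (Suc m)
  have "[n+1..<n + Suc (Suc m) * (s+1) + 1] = [n+1..<n + Suc m * (s+1) + 1] @ [n + Suc m * (s+1) + 1..<n + Suc (Suc m) * (s+1) + 1]"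
    by (rule upt_split[symmetric]) auto
  also have "[n + Suc m * (s+1) + 1..<n + Suc (Suc m) * (s+1) + 1] = (n + Suc m * (s+1) + 1) # [n + Suc m * (s+1) + 2..<n + Suc m * (s+1) + 2 + s]"
    by (subst upt_conv_Cons) (auto simp: algebra_simps)
  finally show ?case using Suc assms by simp
qed

lemma size_kr_Suc: "size (kr_shape k (Suc r)) = size (kr_shape k r) + 1 + (k-1) * (size (kr_shape k r) + 1) + 1"
  by (simp add: size_trunk)

lemma inorder_opt: "k \<ge> 2 \<Longrightarrow> inorder (opt k r n) = [n..<n + size (kr_shape k r)]"
proof (induction r arbitrary: n)
  case 0 thus ?case by simp
next
  case (Suc r)
  define s where "s = size (kr_shape k r)"
  obtain k' where k': "k - 1 = Suc k'" using Suc.prems by (cases "k - 1") auto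
  have IH: "\<And>j. inorder (opt k r j) = [j..<j+s]" using Suc unfolding s_def by simp
  have tr: "inorder (optTr (opt k r) s (k-1) (n+s+1)) = [n+s+2..<n+s+1 + Suc k' * (s+1) + 1]"
    using inorder_optTr[OF IH, of k' "n+s+1"] k' by simp
  have "[n..<n + (s + 1 + Suc k' * (s+1) + 1)] = [n..<n+s] @ [n+s..<n + (s + 1 + Suc k' * (s+1) + 1)]"
    by (rule upt_split[symmetric]) auto
  also have "[n+s..<n + (s + 1 + Suc k' * (s+1) + 1)] = (n+s) # (n+s+1) # [n+s+2..<n+s+1 + Suc k' * (s+1) + 1]"
  proof -
    have a: "n + (s + 1 + Suc k' * (s+1) + 1) = n+s+1 + Suc k' * (s+1) + 1" by simp
    show ?thesis unfolding a
      by (subst upt_conv_Cons, simp, subst upt_conv_Cons, simp, simp add: numeral_2_eq_2)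
  qed
  finally have e: "[n..<n + (s + 1 + Suc k' * (s+1) + 1)] = [n..<n+s] @ (n+s) # (n+s+1) # [n+s+2..<n+s+1 + Suc k' * (s+1) + 1]" .
  have "inorder (opt k (Suc r) n) = [n..<n+s] @ (n+s) # (n+s+1) # [n+s+2..<n+s+1 + Suc k' * (s+1) + 1]"
    using IH tr by (simp del: upt_Suc add: s_def[symmetric])
  thus ?case using e k' unfolding size_kr_Suc s_def[symmetric] by (simp del: upt_Suc)
qed


definition Qv :: "nat \<Rightarrow> (nat \<Rightarrow> nat) \<Rightarrow> nat \<Rightarrow> nat \<Rightarrow> int" where
  "Qv k c r n = int (Dt c (T k r n)) - int (Dt c (opt k r n))"
definition Ev :: "nat \<Rightarrow> (nat \<Rightarrow> nat) \<Rightarrow> nat \<Rightarrow> nat \<Rightarrow> nat \<Rightarrow> int" where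
  "Ev k c r m n = int (Dt c (Tr k r m n)) - int (Dt c (optTr (opt k r) (size (kr_shape k r)) m n))"

lemma Wt_opt: "k \<ge> 2 \<Longrightarrow> Wt c (opt k r n) = Wt c (T k r n)"
  by (simp add: Wt_inorder inorder_opt inorder_T)

lemma Wt_Tr_optTr: "k \<ge> 2 \<Longrightarrow> Wt c (Tr k r (Suc m) n) = c n + Wt c (optTr (opt k r) (size (kr_shape k r)) (Suc m) n)"
proof -
  assume k: "k \<ge> 2"
  have IH: "\<And>j. inorder (opt k r j) = [j..<j + size (kr_shape k r)]" using inorder_opt[OF k] by simp
  show ?thesis unfolding Wt_inorder inorder_Tr inorder_optTr[OF IH]
    by (subst upt_conv_Cons) (auto simp del: upt_Suc)
qed

lemma E1: "k \<ge> 2 \<Longrightarrow> c (n+1) = 0 \<Longrightarrow>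
  Ev k c r 1 n = int (c n) + Qv k c r (n+2) + int (Wt c (T k r (n+2)))"
  using Tr_Suc[of k r 0 n]
  by (simp add: Ev_def Qv_def Tr_0 Dt_hangL)

lemma E2: "k \<ge> 2 \<Longrightarrow>
  Ev k c r (Suc (Suc m)) n = Ev k c r (Suc m) n + int (c n)
     + Qv k c r (n + Suc m * (size (kr_shape k r) + 1) + 2)"
  using Tr_Suc[of k r "Suc m" n] Wt_Tr_optTr[of k c r m n]
    Wt_opt[of k c r "n + Suc m * (size (kr_shape k r) + 1) + 2"]
  by (simp add: Ev_def Qv_def)

lemma Q_Suc: "k \<ge> 2 \<Longrightarrow> c (n + size (kr_shape k r)) = 0 \<Longrightarrow>
  Qv k c (Suc r) n = Qv k c r n + Ev k c r (k-1) (n + size (kr_shape k r) + 1)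
     + int (c (n + size (kr_shape k r) + 1))"
proof -
  assume k: "k \<ge> 2" and c0: "c (n + size (kr_shape k r)) = 0"
  obtain k' where k': "k - 1 = Suc k'" using k by (cases "k - 1") auto
  have w: "Wt c (hangR (opt k r n) (n + size (kr_shape k r))) = Wt c (T k r n)"
    using c0 Wt_opt[OF k] by (simp add: Wt_inorder)
  show ?thesis
    using Wt_Tr_optTr[OF k, of c r k' "n + size (kr_shape k r) + 1"] w
    by (simp add: Qv_def Ev_def T_Suc Dt_hangR[of c "n + size (kr_shape k r)", OF c0] k' k'[simplified])
qed


fun good :: "(nat \<Rightarrow> nat \<Rightarrow> bool) \<Rightarrow> (nat \<Rightarrow> nat) \<Rightarrow> nat tree \<Rightarrow> bool" where
  "good R c Leaf = True"
| "good R c (Node l a r) = (good R c l \<and> good R c r \<and>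
     ((l \<noteq> Leaf \<or> r \<noteq> Leaf) \<longrightarrow> c a = 0 \<and> R (Wt c l) (Wt c r)))"

lemma T_ne: "T k r n \<noteq> Leaf"
  by (cases r) (auto simp: T_0 T_Suc)
lemma Tr_ne: "Tr k r m n \<noteq> Leaf"
  by (cases m) (auto simp: Tr_0 Tr_Suc)

definition Rm :: "nat \<Rightarrow> nat \<Rightarrow> bool" where
  "Rm a b \<longleftrightarrow> a = b \<or> a = 2*b \<or> b = 2*a"

lemma trunk_mixed:
  fixes \<beta> :: real
  assumes k: "k \<ge> 2"
    and IH: "\<And>j. good Rm c (T k r j) \<Longrightarrow> real_of_int (Qv k c r j) \<ge> \<beta> * Wt c (T k r j)"
  shows "good Rm c (Tr k r (Suc m) n) \<Longrightarrow>
    real_of_int (Ev k c r (Suc m) n) \<ge> real (Suc m) * c n + \<beta> * (real (Wt c (Tr k r (Suc m) n)) - c n)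
       + Wt c (T k r (n+2))
    \<and> 3^(Suc m) * c n \<ge> Wt c (Tr k r (Suc m) n)
    \<and> (c n > 0 \<longrightarrow> Wt c (T k r (n+2)) > 0)"
proof (induction m)
  case 0
  have tr: "Tr k r (Suc 0) n = Node (Node Leaf n Leaf) (n+1) (T k r (n+2))"
    using Tr_Suc[of k r 0 n] by (simp add: Tr_0)
  from 0 have g: "c (n+1) = 0" "Rm (c n) (Wt c (T k r (n+2)))" "good Rm c (T k r (n+2))"
    by (simp_all add: tr)
  have q: "real_of_int (Qv k c r (n+2)) \<ge> \<beta> * Wt c (T k r (n+2))" using IH g(3) .
  have wt: "Wt c (Tr k r (Suc 0) n) = c n + Wt c (T k r (n+2))" using g(1) by (simp add: tr)
  show ?case using E1[of k c n r, OF k g(1)] q wt g(2) unfolding Rm_def by auto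
next
  case (Suc m)
  let ?j = "n + Suc m * (size (kr_shape k r) + 1) + 2"
  have tr: "Tr k r (Suc (Suc m)) n = Node (Tr k r (Suc m) n) (n + Suc m * (size (kr_shape k r) + 1) + 1) (T k r ?j)"
    using Tr_Suc[of k r "Suc m" n] by (simp add: add.assoc)
  from Suc.prems have g: "good Rm c (Tr k r (Suc m) n)" "good Rm c (T k r ?j)"
     "c (n + Suc m * (size (kr_shape k r) + 1) + 1) = 0" "Rm (Wt c (Tr k r (Suc m) n)) (Wt c (T k r ?j))"
    unfolding tr by (auto simp: Tr_ne T_ne)
  have q: "real_of_int (Qv k c r ?j) \<ge> \<beta> * Wt c (T k r ?j)" using IH g(2) .
  have wt: "Wt c (Tr k r (Suc (Suc m)) n) = Wt c (Tr k r (Suc m) n) + Wt c (T k r ?j)"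
    using g(3) by (simp add: tr)
  note ih = Suc.IH[OF g(1)]
  have e: "Ev k c r (Suc (Suc m)) n = Ev k c r (Suc m) n + int (c n) + Qv k c r ?j"
    using E2[OF k, of c r m n] by simp
  have b1: "real_of_int (Ev k c r (Suc (Suc m)) n) \<ge> real (Suc (Suc m)) * c n + \<beta> * (real (Wt c (Tr k r (Suc (Suc m)) n)) - c n)
       + Wt c (T k r (n+2))"
    using ih q unfolding e wt by (simp add: algebra_simps)
  have "Wt c (Tr k r (Suc (Suc m)) n) \<le> 3 * Wt c (Tr k r (Suc m) n)"
    using g(4) unfolding wt Rm_def by auto
  also have "\<dots> \<le> 3 * (3^(Suc m) * c n)" using ih by (simp add: mult_ac)
  finally have b2: "Wt c (Tr k r (Suc (Suc m)) n) \<le> 3^(Suc (Suc m)) * c n" by simp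
  show ?case using b1 b2 ih by simp
qed


lemma trunk_strong:
  fixes \<gamma> :: real
  assumes k: "k \<ge> 2"
    and IH: "\<And>j. good (=) c (T k r j) \<Longrightarrow> real_of_int (Qv k c r j) = \<gamma> * Wt c (T k r j)"
  shows "good (=) c (Tr k r (Suc m) n) \<Longrightarrow>
    real_of_int (Ev k c r (Suc m) n) = real (Suc m) * c n + \<gamma> * (real (Wt c (Tr k r (Suc m) n)) - c n)
       + Wt c (T k r (n+2))
    \<and> Wt c (Tr k r (Suc m) n) = 2^(Suc m) * c n
    \<and> Wt c (T k r (n+2)) = c n"
proof (induction m)
  case 0
  have tr: "Tr k r (Suc 0) n = Node (Node Leaf n Leaf) (n+1) (T k r (n+2))"
    using Tr_Suc[of k r 0 n] by (simp add: Tr_0)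
  from 0 have g: "c (n+1) = 0" "c n = Wt c (T k r (n+2))" "good (=) c (T k r (n+2))"
    by (simp_all add: tr)
  have q: "real_of_int (Qv k c r (n+2)) = \<gamma> * Wt c (T k r (n+2))" using IH g(3) .
  have wt: "Wt c (Tr k r (Suc 0) n) = c n + Wt c (T k r (n+2))" using g(1) by (simp add: tr)
  show ?case using E1[of k c n r, OF k g(1)] q wt g(2) by auto
next
  case (Suc m)
  let ?j = "n + Suc m * (size (kr_shape k r) + 1) + 2"
  have tr: "Tr k r (Suc (Suc m)) n = Node (Tr k r (Suc m) n) (n + Suc m * (size (kr_shape k r) + 1) + 1) (T k r ?j)"
    using Tr_Suc[of k r "Suc m" n] by (simp add: add.assoc)
  from Suc.prems have g: "good (=) c (Tr k r (Suc m) n)" "good (=) c (T k r ?j)"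
     "c (n + Suc m * (size (kr_shape k r) + 1) + 1) = 0" "Wt c (Tr k r (Suc m) n) = Wt c (T k r ?j)"
    unfolding tr by (auto simp: Tr_ne T_ne)
  have q: "real_of_int (Qv k c r ?j) = \<gamma> * Wt c (T k r ?j)" using IH g(2) .
  have wt: "Wt c (Tr k r (Suc (Suc m)) n) = Wt c (Tr k r (Suc m) n) + Wt c (T k r ?j)"
    using g(3) by (simp add: tr)
  note ih = Suc.IH[OF g(1)]
  have e: "Ev k c r (Suc (Suc m)) n = Ev k c r (Suc m) n + int (c n) + Qv k c r ?j"
    using E2[OF k, of c r m n] by simp
  have b1: "real_of_int (Ev k c r (Suc (Suc m)) n) = real (Suc (Suc m)) * c n + \<gamma> * (real (Wt c (Tr k r (Suc (Suc m)) n)) - c n)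
       + Wt c (T k r (n+2))"
    using ih q unfolding e wt by (simp add: algebra_simps)
  have b2: "Wt c (Tr k r (Suc (Suc m)) n) = 2^(Suc (Suc m)) * c n"
    using g(4) ih unfolding wt by simp
  show ?case using b1 b2 ih by simp
qed

lemma Qv_0: "Qv k c 0 n = 0"
  by (simp add: Qv_def T_0)

lemma step_mixed:
  fixes \<beta> :: real
  assumes k: "k \<ge> 2"
    and IH: "\<And>j. good Rm c (T k r j) \<Longrightarrow> real_of_int (Qv k c r j) \<ge> \<beta> * Wt c (T k r j)"
    and g: "good Rm c (T k (Suc r) n)"
  shows "real_of_int (Qv k c (Suc r) n) \<ge> real k * c (n + size (kr_shape k r) + 1)
      + \<beta> * (real (Wt c (T k (Suc r) n)) - c (n + size (kr_shape k r) + 1))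
      + Wt c (T k r (n + size (kr_shape k r) + 1 + 2))
    \<and> Wt c (T k (Suc r) n) \<le> 3^k * c (n + size (kr_shape k r) + 1)
    \<and> (Wt c (T k (Suc r) n) > 0 \<longrightarrow> Wt c (T k r (n + size (kr_shape k r) + 1 + 2)) > 0)"
proof -
  obtain k' where k': "k - 1 = Suc k'" using k by (cases "k - 1") auto
  define s where "s = size (kr_shape k r)"
  define x where "x = c (n+s+1)"
  have ts: "T k (Suc r) n = Node (T k r n) (n+s) (Tr k r (Suc k') (n+s+1))"
    using T_Suc[of k r n] k' s_def by simp
  from g have g1: "good Rm c (T k r n)" "good Rm c (Tr k r (Suc k') (n+s+1))" "c (n+s) = 0"
    "Rm (Wt c (T k r n)) (Wt c (Tr k r (Suc k') (n+s+1)))"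
    unfolding ts by (auto simp: T_ne)
  note tr = trunk_mixed[OF k IH g1(2)]
  have q0: "real_of_int (Qv k c r n) \<ge> \<beta> * Wt c (T k r n)" using IH g1(1) .
  have qs: "Qv k c (Suc r) n = Qv k c r n + Ev k c r (Suc k') (n+s+1) + int x"
    using Q_Suc[of k c n r] k g1(3) k' unfolding s_def x_def by simp
  have N: "Wt c (T k (Suc r) n) = Wt c (T k r n) + Wt c (Tr k r (Suc k') (n+s+1))"
    using g1(3) unfolding ts by simp
  have b1: "real_of_int (Qv k c (Suc r) n) \<ge> real k * x + \<beta> * (real (Wt c (T k (Suc r) n)) - x)
      + Wt c (T k r (n + s + 1 + 2))"
  proof -
    have "real k = real (Suc k') + 1" using k' k by linarith
    thus ?thesis using tr q0 unfolding qs N x_def by (simp add: algebra_simps)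
  qed
  have "Wt c (T k (Suc r) n) \<le> 3 * Wt c (Tr k r (Suc k') (n+s+1))"
    using g1(4) unfolding N Rm_def by auto
  also have "\<dots> \<le> 3 * (3^(Suc k') * x)" using tr unfolding x_def by simp
  also have "3 * (3^(Suc k') * x) = 3^k * x" using k' k
    by (metis Suc_diff_1 less_le_trans pos2 power_Suc mult.assoc zero_less_Suc)
  finally have b2: "Wt c (T k (Suc r) n) \<le> 3^k * x" .
  have b3: "Wt c (T k (Suc r) n) > 0 \<longrightarrow> Wt c (T k r (n + s + 1 + 2)) > 0"
    using b2 tr unfolding x_def by auto
  show ?thesis using b1 b2 b3 unfolding x_def s_def by simp
qed


lemma alg_mixed:
  fixes x N a :: real and k :: nat
  assumes "0 \<le> a" "N \<le> 3^k * x"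
  shows "real k * x + real k * (1 - a) * (N - x) \<ge> real k * (1 - a * (1 - 1/3^k)) * N"
proof -
  have e: "real k * x + real k * (1 - a) * (N - x) - real k * (1 - a * (1 - 1/3^k)) * N
      = real k * a * (x - N / 3^k)" by (simp add: field_simps)
  have "N / 3^k \<le> x" using assms(2) by (simp add: divide_le_eq mult.commute)
  hence "real k * a * (x - N / 3^k) \<ge> 0" using assms(1) by simp
  thus ?thesis using e by linarith
qed

lemma mixed_main: "k \<ge> 2 \<Longrightarrow> good Rm c (T k r n) \<Longrightarrow>
   real_of_int (Qv k c r n) \<ge> real k * (1 - (1 - 1/3^k)^r) * Wt c (T k r n)"
proof (induction r arbitrary: n)
  case 0 thus ?case by (simp add: Qv_0)
next
  case (Suc r)
  define s where "s = size (kr_shape k r)"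
  note st = step_mixed[OF Suc.prems(1), where \<beta> = "real k * (1 - (1 - 1/3^k)^r)", OF Suc.IH[OF Suc.prems(1)] Suc.prems(2)]
  have a: "N \<le> 3^k * x \<Longrightarrow> real k * x + real k * (1 - (1 - 1/3^k)^r) * (N - x) \<ge> real k * (1 - (1 - 1/3^k)^Suc r) * N"
    for x N :: real
    using alg_mixed[of "(1 - 1/3^k)^r" N k x] by (simp add: mult_ac)
  have "real (Wt c (T k (Suc r) n)) \<le> 3^k * real (c (n+s+1))"
    using st unfolding s_def by (metis of_nat_le_iff of_nat_mult of_nat_numeral of_nat_power)
  from a[OF this] show ?case using st unfolding s_def by (simp add: algebra_simps)
qed

lemma mixed_strict: "k \<ge> 2 \<Longrightarrow> good Rm c (T k (Suc r) n) \<Longrightarrow> Wt c (T k (Suc r) n) > 0 \<Longrightarrow>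
   real_of_int (Qv k c (Suc r) n) > real k * (1 - (1 - 1/3^k)^Suc r) * Wt c (T k (Suc r) n)"
proof -
  assume k: "k \<ge> 2" and g: "good Rm c (T k (Suc r) n)" and pos: "Wt c (T k (Suc r) n) > 0"
  define s where "s = size (kr_shape k r)"
  note st = step_mixed[OF k, where \<beta> = "real k * (1 - (1 - 1/3^k)^r)", OF mixed_main[OF k] g]
  have a: "N \<le> 3^k * x \<Longrightarrow> real k * x + real k * (1 - (1 - 1/3^k)^r) * (N - x) \<ge> real k * (1 - (1 - 1/3^k)^Suc r) * N"
    for x N :: real
    using alg_mixed[of "(1 - 1/3^k)^r" N k x] by (simp add: mult_ac)
  have "real (Wt c (T k (Suc r) n)) \<le> 3^k * real (c (n+s+1))"
    using st unfolding s_def by (metis of_nat_le_iff of_nat_mult of_nat_numeral of_nat_power)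
  from a[OF this] show ?thesis using st pos unfolding s_def by (simp add: algebra_simps)
qed

lemma step_strong:
  fixes \<gamma> :: real
  assumes k: "k \<ge> 2"
    and IH: "\<And>j. good (=) c (T k r j) \<Longrightarrow> real_of_int (Qv k c r j) = \<gamma> * Wt c (T k r j)"
    and g: "good (=) c (T k (Suc r) n)"
  shows "real_of_int (Qv k c (Suc r) n) = real k * c (n + size (kr_shape k r) + 1)
      + \<gamma> * (real (Wt c (T k (Suc r) n)) - c (n + size (kr_shape k r) + 1))
      + c (n + size (kr_shape k r) + 1)
    \<and> Wt c (T k (Suc r) n) = 2^k * c (n + size (kr_shape k r) + 1)"
proof -
  obtain k' where k': "k - 1 = Suc k'" using k by (cases "k - 1") auto
  define s where "s = size (kr_shape k r)"
  define x where "x = c (n+s+1)"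
  have ts: "T k (Suc r) n = Node (T k r n) (n+s) (Tr k r (Suc k') (n+s+1))"
    using T_Suc[of k r n] k' s_def by simp
  from g have g1: "good (=) c (T k r n)" "good (=) c (Tr k r (Suc k') (n+s+1))" "c (n+s) = 0"
    "Wt c (T k r n) = Wt c (Tr k r (Suc k') (n+s+1))"
    unfolding ts by (auto simp: T_ne)
  note tr = trunk_strong[OF k IH g1(2)]
  have q0: "real_of_int (Qv k c r n) = \<gamma> * Wt c (T k r n)" using IH g1(1) .
  have qs: "Qv k c (Suc r) n = Qv k c r n + Ev k c r (Suc k') (n+s+1) + int x"
    using Q_Suc[of k c n r] k g1(3) k' unfolding s_def x_def by simp
  have N: "Wt c (T k (Suc r) n) = Wt c (T k r n) + Wt c (Tr k r (Suc k') (n+s+1))"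
    using g1(3) unfolding ts by simp
  have b1: "real_of_int (Qv k c (Suc r) n) = real k * x + \<gamma> * (real (Wt c (T k (Suc r) n)) - x) + x"
  proof -
    have "real k = real (Suc k') + 1" using k' k by linarith
    thus ?thesis using tr q0 unfolding qs N x_def by (simp add: algebra_simps)
  qed
  have "Wt c (T k (Suc r) n) = 2 * (2^(Suc k') * x)"
    using g1(4) tr unfolding N x_def by simp
  also have "2 * (2^(Suc k') * x) = 2^k * x" using k' k
    by (metis Suc_diff_1 less_le_trans pos2 power_Suc mult.assoc zero_less_Suc)
  finally have b2: "Wt c (T k (Suc r) n) = 2^k * x" .
  show ?thesis using b1 b2 unfolding x_def s_def by simp
qed

lemma strong_main: "k \<ge> 2 \<Longrightarrow> good (=) c (T k r n) \<Longrightarrow>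
   real_of_int (Qv k c r n) = real (k+1) * (1 - (1 - 1/2^k)^r) * Wt c (T k r n)"
proof (induction r arbitrary: n)
  case 0 thus ?case by (simp add: Qv_0)
next
  case (Suc r)
  define s where "s = size (kr_shape k r)"
  note st = step_strong[OF Suc.prems(1), where \<gamma> = "real (k+1) * (1 - (1 - 1/2^k)^r)", OF Suc.IH[OF Suc.prems(1)] Suc.prems(2)]
  define x where "x = real (c (n+s+1))"
  define a where "a = (1 - 1/(2::real)^k)^r"
  have N: "real (Wt c (T k (Suc r) n)) = 2^k * x"
    using st unfolding s_def x_def by (metis of_nat_mult of_nat_numeral of_nat_power)
  have q: "real_of_int (Qv k c (Suc r) n) = real k * x + real (k+1) * (1 - a) * (2^k * x - x) + x"
    using st N unfolding s_def x_def a_def by simp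
  have "real k * x + real (k+1) * (1 - a) * (2^k * x - x) + x = real (k+1) * (1 - a * (1 - 1/2^k)) * (2^k * x)"
    by (simp add: field_simps)
  thus ?case using q N unfolding a_def by simp
qed



lemma block_card:
  fixes q :: nat
  assumes "(\<And>t. card {i. q*t \<le> i \<and> i < q*t+q \<and> (i+p) mod q = j} = 1)"
  shows "card {i. i < q*t \<and> (i+p) mod q = j} = t"
proof (induction t)
  case 0 thus ?case by simp
next
  case (Suc t)
  have "{i. i < q*Suc t \<and> (i+p) mod q = j} = {i. i < q*t \<and> (i+p) mod q = j} \<union> {i. q*t \<le> i \<and> i < q*t+q \<and> (i+p) mod q = j}"
    by auto
  moreover have "card ({i. i < q*t \<and> (i+p) mod q = j} \<union> {i. q*t \<le> i \<and> i < q*t+q \<and> (i+p) mod q = j})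
     = card {i. i < q*t \<and> (i+p) mod q = j} + card {i. q*t \<le> i \<and> i < q*t+q \<and> (i+p) mod q = j}"
    by (rule card_Un_disjoint) auto
  ultimately show ?case using Suc assms[of t] by simp
qed

lemma card2: "j < 2 \<Longrightarrow> card {i. i < 2*t \<and> (i+p) mod 2 = j} = t"
proof (rule block_card)
  fix t assume j: "j < 2"
  have e: "{i. 2*t \<le> i \<and> i < 2*t+2 \<and> (i+p) mod 2 = j} =
     (if (2*t+p) mod 2 = j then {2*t} else {}) \<union> (if (2*t+1+p) mod 2 = j then {2*t+1} else {})"
  proof -
    have "{i. 2*t \<le> i \<and> i < 2*t+2 \<and> (i+p) mod 2 = j} = {i\<in>{2*t, 2*t+1}. (i+p) mod 2 = j}" by auto
    also have "\<dots> = (if (2*t+p) mod 2 = j then {2*t} else {}) \<union> (if (2*t+1+p) mod 2 = j then {2*t+1} else {})"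
      by (auto simp del: mod2_Suc_Suc mod_Suc)
    finally show ?thesis .
  qed
  have m: "(2*t+p) mod 2 = p mod 2" "(2*t+1+p) mod 2 = (1 + p mod 2) mod 2"
    by (simp, metis add.assoc mod_add_right_eq mod_mult_self3 mult.commute)
  have "p mod 2 = 0 \<or> p mod 2 = 1" by auto
  moreover have "j = 0 \<or> j = 1" using j by auto
  ultimately show "card {i. 2*t \<le> i \<and> i < 2*t+2 \<and> (i+p) mod 2 = j} = 1"
    unfolding e m by auto
qed

lemma card3: "j < 3 \<Longrightarrow> card {i. i < 3*t \<and> (i+p) mod 3 = j} = t"
proof (rule block_card)
  fix t assume j: "j < 3"
  have e: "{i. 3*t \<le> i \<and> i < 3*t+3 \<and> (i+p) mod 3 = j} =
     (if (3*t+p) mod 3 = j then {3*t} else {}) \<union> (if (3*t+1+p) mod 3 = j then {3*t+1} else {})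
     \<union> (if (3*t+2+p) mod 3 = j then {3*t+2} else {})"
  proof -
    have "{i. 3*t \<le> i \<and> i < 3*t+3 \<and> (i+p) mod 3 = j} = {i\<in>{3*t, 3*t+1, 3*t+2}. (i+p) mod 3 = j}" by auto
    also have "\<dots> = (if (3*t+p) mod 3 = j then {3*t} else {}) \<union> (if (3*t+1+p) mod 3 = j then {3*t+1} else {})
     \<union> (if (3*t+2+p) mod 3 = j then {3*t+2} else {})"
      by (auto simp del: mod_Suc)
    finally show ?thesis .
  qed
  have m: "(3*t+p) mod 3 = p mod 3" "(3*t+1+p) mod 3 = (1 + p mod 3) mod 3" "(3*t+2+p) mod 3 = (2 + p mod 3) mod 3"
    by (simp, metis add.assoc mod_add_right_eq mod_mult_self3 mult.commute,
        metis add.assoc mod_add_right_eq mod_mult_self3 mult.commute)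
  have "p mod 3 = 0 \<or> p mod 3 = 1 \<or> p mod 3 = 2" by auto
  moreover have "j = 0 \<or> j = 1 \<or> j = 2" using j by auto
  ultimately show "card {i. 3*t \<le> i \<and> i < 3*t+3 \<and> (i+p) mod 3 = j} = 1"
    unfolding e m by auto
qed


lemma sum_count_filter: "finite S \<Longrightarrow> (\<Sum>x\<in>S. count_list X x) = length (filter (\<lambda>x. x \<in> S) X)"
proof (induction X)
  case Nil thus ?case by simp
next
  case (Cons y X)
  have "(\<Sum>x\<in>S. count_list (y # X) x) = (\<Sum>x\<in>S. (if y = x then 1 else 0) + count_list X x)"
    by (intro sum.cong) auto
  also have "\<dots> = (\<Sum>x\<in>S. (if y = x then 1 else 0)) + (\<Sum>x\<in>S. count_list X x)"
    by (simp add: sum.distrib)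
  also have "(\<Sum>x\<in>S. (if y = x then 1 else 0)::nat) = (if y \<in> S then 1 else 0)"
    using Cons.prems by (simp add: sum.delta)
  finally show ?case using Cons by simp
qed

lemma Wt_count: "bst t \<Longrightarrow> Wt (count_list X) t = length (filter (\<lambda>x. x \<in> set_tree t) X)"
  by (simp add: Wt_sum sum_count_filter)

lemma len_filter_rep: "length (filter P (rep n xs)) = n * length (filter P xs)"
  by (induction n) auto

lemma subseq_rep: "subseq_at v (rep n X) = rep n (subseq_at v X)"
  by (simp add: subseq_at_def filter_concat)

lemma cnt_sub: "S \<subseteq> set_tree v \<Longrightarrow>
   length (filter (\<lambda>x. x \<in> S) (subseq_at v X)) = length (filter (\<lambda>x. x \<in> S) X)"
  unfolding subseq_at_def by (simp add: filter_filter) (metis (mono_tags, lifting) filter_cong subsetD)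

lemma pos_count:
  assumes pat: "\<forall>i<length Y. Y!i \<in> B ((i+p) mod q)"
    and disj: "\<And>i j. i < q \<Longrightarrow> j < q \<Longrightarrow> i \<noteq> j \<Longrightarrow> B i \<inter> B j = {}"
    and j: "j < q"
  shows "length (filter (\<lambda>x. x \<in> B j) Y) = card {i. i < length Y \<and> (i+p) mod q = j}"
proof -
  have q: "q > 0" using j by simp
  have "{i. i < length Y \<and> Y!i \<in> B j} = {i. i < length Y \<and> (i+p) mod q = j}"
  proof (intro Collect_cong iffI)
    fix i assume a: "i < length Y \<and> Y!i \<in> B j"
    have "Y!i \<in> B ((i+p) mod q)" using pat a by simp
    moreover have "(i+p) mod q < q" using q by simp
    ultimately have "(i+p) mod q = j" using disj[OF _ j] a by blast
    thus "i < length Y \<and> (i+p) mod q = j" using a by simp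
  next
    fix i assume "i < length Y \<and> (i+p) mod q = j"
    thus "i < length Y \<and> Y!i \<in> B j" using pat by auto
  qed
  thus ?thesis by (simp add: length_filter_conv_card)
qed


lemma alt_pattern:
  assumes alt: "\<forall>i. Suc i < length Y \<longrightarrow> (Y!i \<in> L \<and> Y!Suc i \<in> R) \<or> (Y!i \<in> R \<and> Y!Suc i \<in> L)"
    and disj: "L \<inter> R = {}" and len: "length Y \<ge> 2"
  shows "\<exists>p. \<forall>i<length Y. Y!i \<in> (if (i+p) mod 2 = 0 then L else R)"
proof -
  define p :: nat where "p = (if Y!0 \<in> L then 0 else 1)"
  have "i < length Y \<longrightarrow> Y!i \<in> (if (i+p) mod 2 = 0 then L else R)" for i
  proof (induction i)
    case 0
    have "Y!0 \<in> L \<or> Y!0 \<in> R" using alt[rule_format, of 0] len by auto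
    thus ?case by (auto simp: p_def)
  next
    case (Suc i)
    show ?case
    proof
      assume si: "Suc i < length Y"
      hence h: "Y!i \<in> (if (i+p) mod 2 = 0 then L else R)" using Suc by simp
      have a: "(Y!i \<in> L \<and> Y!Suc i \<in> R) \<or> (Y!i \<in> R \<and> Y!Suc i \<in> L)" using alt si by blast
      show "Y!Suc i \<in> (if (Suc i+p) mod 2 = 0 then L else R)"
      proof (cases "(i+p) mod 2 = 0")
        case True
        hence "(Suc i + p) mod 2 \<noteq> 0" by presburger
        thus ?thesis using True h a disj by auto
      next
        case False
        hence "(Suc i + p) mod 2 = 0" by presburger
        thus ?thesis using False h a disj by auto
      qed
    qed
  qed
  thus ?thesis by blast
qed

lemma bst_disj:
  assumes "bst (Node l a r)"
  shows "set_tree l \<inter> set_tree r = {}" "a \<notin> set_tree l" "a \<notin> set_tree r"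
  using assms by fastforce+

lemma sub_l: "set_tree l \<subseteq> set_tree (Node l a r)" by auto
lemma sub_r: "set_tree r \<subseteq> set_tree (Node l a r)" by auto

lemma node_strong:
  fixes X :: "nat list"
  assumes b: "bst (Node l a r)" and st: "strongly_stable_node (Node l a r) (rep 6 X)"
  shows "count_list X a = 0 \<and> Wt (count_list X) l = Wt (count_list X) r"
proof -
  let ?v = "Node l a r"
  let ?c = "count_list X"
  define Xv where "Xv = subseq_at ?v X"
  define Y where "Y = subseq_at ?v (rep 6 X)"
  have Y: "Y = rep 6 Xv" unfolding Y_def Xv_def by (simp add: subseq_rep)
  have bl: "bst l" and br: "bst r" using b by auto
  have m: "length Xv = Wt ?c l + ?c a + Wt ?c r"
    using Wt_count[OF b, of X] unfolding Xv_def subseq_at_def by simp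
  have wl: "Wt ?c l = length (filter (\<lambda>x. x \<in> set_tree l) Xv)"
    using Wt_count[OF bl, of X] cnt_sub[of "set_tree l" ?v X, OF sub_l] unfolding Xv_def by auto
  have wr: "Wt ?c r = length (filter (\<lambda>x. x \<in> set_tree r) Xv)"
    using Wt_count[OF br, of X] cnt_sub[of "set_tree r" ?v X, OF sub_r] unfolding Xv_def by auto
  show ?thesis
  proof (cases "length Xv = 0")
    case True thus ?thesis using m by simp
  next
    case False
    have len: "length Y = 2 * (3 * length Xv)" unfolding Y by (simp add: length_concat sum_list_replicate)
    have alt: "\<forall>i. Suc i < length Y \<longrightarrow> (Y!i \<in> set_tree l \<and> Y!Suc i \<in> set_tree r) \<or> (Y!i \<in> set_tree r \<and> Y!Suc i \<in> set_tree l)"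
      using st unfolding strongly_stable_node_def Y_def Let_def by simp
    obtain p where p: "\<forall>i<length Y. Y!i \<in> (if (i+p) mod 2 = 0 then set_tree l else set_tree r)"
      using alt_pattern[OF alt bst_disj(1)[OF b]] len False by auto
    define B where "B = (\<lambda>j::nat. if j = 0 then set_tree l else set_tree r)"
    have pat: "\<forall>i<length Y. Y!i \<in> B ((i+p) mod 2)" using p unfolding B_def by simp
    have disj: "\<And>i j. i < 2 \<Longrightarrow> j < 2 \<Longrightarrow> i \<noteq> j \<Longrightarrow> B i \<inter> B j = {}"
      using bst_disj(1)[OF b] unfolding B_def by auto
    have cl: "length (filter (\<lambda>x. x \<in> set_tree l) Y) = 3 * length Xv"
      using pos_count[OF pat disj, of 0] card2[of 0 "3 * length Xv" p] unfolding len B_def by simp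
    have cr: "length (filter (\<lambda>x. x \<in> set_tree r) Y) = 3 * length Xv"
      using pos_count[OF pat disj, of 1] card2[of 1 "3 * length Xv" p] unfolding len B_def by simp
    have "6 * Wt ?c l = 3 * length Xv" using cl unfolding Y len_filter_rep wl by simp
    moreover have "6 * Wt ?c r = 3 * length Xv" using cr unfolding Y len_filter_rep wr by simp
    ultimately show ?thesis using m by simp
  qed
qed


lemma cyc_core:
  assumes c3: "cyclic3 (rep 6 Xv) A0 A1 A2"
    and d: "A0 \<inter> A1 = {}" "A0 \<inter> A2 = {}" "A1 \<inter> A2 = {}"
  shows "3 * length (filter (\<lambda>x. x \<in> A0) Xv) = length Xv
       \<and> 3 * length (filter (\<lambda>x. x \<in> A1) Xv) = length Xv
       \<and> 3 * length (filter (\<lambda>x. x \<in> A2) Xv) = length Xv"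
proof -
  define Y where "Y = rep 6 Xv"
  obtain p where p: "\<forall>i<length Y. Y!i \<in> [A0, A1, A2] ! ((i+p) mod 3)"
    using c3 unfolding cyclic3_def Y_def by blast
  define B where "B = (\<lambda>j::nat. [A0, A1, A2] ! j)"
  have pat: "\<forall>i<length Y. Y!i \<in> B ((i+p) mod 3)" using p unfolding B_def by simp
  have disj: "\<And>i j. i < 3 \<Longrightarrow> j < 3 \<Longrightarrow> i \<noteq> j \<Longrightarrow> B i \<inter> B j = {}"
  proof -
    fix i j :: nat assume "i < 3" "j < 3" "i \<noteq> j"
    hence "(i = 0 \<or> i = 1 \<or> i = 2) \<and> (j = 0 \<or> j = 1 \<or> j = 2)" by auto
    thus "B i \<inter> B j = {}" using d \<open>i \<noteq> j\<close> unfolding B_def by (auto simp: Int_commute)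
  qed
  have len: "length Y = 3 * (2 * length Xv)" unfolding Y_def by (simp add: length_concat sum_list_replicate)
  have "length (filter (\<lambda>x. x \<in> B j) Y) = 2 * length Xv" if "j < 3" for j
    using pos_count[OF pat disj that] card3[OF that, of "2 * length Xv" p] unfolding len by simp
  from this[of 0] this[of 1] this[of 2] show ?thesis
    unfolding B_def Y_def len_filter_rep by simp
qed

lemma node_weak_left:
  fixes X :: "nat list"
  assumes b: "bst (Node (Node ll b lr) a r)"
    and c3: "cyclic3 (subseq_at (Node (Node ll b lr) a r) (rep 6 X)) (set_tree ll) (set_tree lr) (set_tree r)"
  shows "count_list X a = 0 \<and> Wt (count_list X) (Node ll b lr) = 2 * Wt (count_list X) r"
proof -
  let ?v = "Node (Node ll b lr) a r"
  let ?c = "count_list X"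
  define Xv where "Xv = subseq_at ?v X"
  have bl: "bst ll" "bst lr" "bst r" using b by auto
  have o1: "\<forall>x\<in>set_tree ll. x < a" "\<forall>x\<in>set_tree lr. x < a" "\<forall>x\<in>set_tree r. a < x"
    "\<forall>x\<in>set_tree ll. x < b" "\<forall>x\<in>set_tree lr. b < x" using b by auto
  have d: "set_tree ll \<inter> set_tree lr = {}" "set_tree ll \<inter> set_tree r = {}" "set_tree lr \<inter> set_tree r = {}"
    using o1 by (meson disjoint_iff less_asym less_trans)+
  note cc = cyc_core[OF c3[unfolded subseq_rep, folded Xv_def] d]
  have m: "length Xv = Wt ?c ll + ?c b + Wt ?c lr + ?c a + Wt ?c r"
    using Wt_count[OF b, of X] unfolding Xv_def subseq_at_def by simp
  have s1: "set_tree ll \<subseteq> set_tree ?v" "set_tree lr \<subseteq> set_tree ?v" "set_tree r \<subseteq> set_tree ?v" by auto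
  have w: "Wt ?c ll = length (filter (\<lambda>x. x \<in> set_tree ll) Xv)"
     "Wt ?c lr = length (filter (\<lambda>x. x \<in> set_tree lr) Xv)"
     "Wt ?c r = length (filter (\<lambda>x. x \<in> set_tree r) Xv)"
    using Wt_count[OF bl(1), of X] Wt_count[OF bl(2), of X] Wt_count[OF bl(3), of X]
      cnt_sub[OF s1(1), of X] cnt_sub[OF s1(2), of X] cnt_sub[OF s1(3), of X]
    unfolding Xv_def by auto
  show ?thesis using cc m w by simp
qed

lemma node_weak_right:
  fixes X :: "nat list"
  assumes b: "bst (Node l a (Node rl b rr))"
    and c3: "cyclic3 (subseq_at (Node l a (Node rl b rr)) (rep 6 X)) (set_tree rr) (set_tree rl) (set_tree l)"
  shows "count_list X a = 0 \<and> Wt (count_list X) (Node rl b rr) = 2 * Wt (count_list X) l"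
proof -
  let ?v = "Node l a (Node rl b rr)"
  let ?c = "count_list X"
  define Xv where "Xv = subseq_at ?v X"
  have bl: "bst rr" "bst rl" "bst l" using b by auto
  have o1: "\<forall>x\<in>set_tree l. x < a" "\<forall>x\<in>set_tree rl. a < x" "\<forall>x\<in>set_tree rr. a < x"
    "\<forall>x\<in>set_tree rl. x < b" "\<forall>x\<in>set_tree rr. b < x" using b by auto
  have d: "set_tree rr \<inter> set_tree rl = {}" "set_tree rr \<inter> set_tree l = {}" "set_tree rl \<inter> set_tree l = {}"
    using o1 by (meson disjoint_iff less_asym less_trans)+
  note cc = cyc_core[OF c3[unfolded subseq_rep, folded Xv_def] d]
  have m: "length Xv = Wt ?c l + ?c a + Wt ?c rl + ?c b + Wt ?c rr"
    using Wt_count[OF b, of X] unfolding Xv_def subseq_at_def by simp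
  have s1: "set_tree rr \<subseteq> set_tree ?v" "set_tree rl \<subseteq> set_tree ?v" "set_tree l \<subseteq> set_tree ?v" by auto
  have w: "Wt ?c rr = length (filter (\<lambda>x. x \<in> set_tree rr) Xv)"
     "Wt ?c rl = length (filter (\<lambda>x. x \<in> set_tree rl) Xv)"
     "Wt ?c l = length (filter (\<lambda>x. x \<in> set_tree l) Xv)"
    using Wt_count[OF bl(1), of X] Wt_count[OF bl(2), of X] Wt_count[OF bl(3), of X]
      cnt_sub[OF s1(1), of X] cnt_sub[OF s1(2), of X] cnt_sub[OF s1(3), of X]
    unfolding Xv_def by auto
  show ?thesis using cc m w by simp
qed



lemma good_intro:
  "(\<forall>v\<in>subtrees t. inner v \<longrightarrow> c (value v) = 0 \<and> R (Wt c (left v)) (Wt c (right v))) \<Longrightarrow> good R c t"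
proof (induction t)
  case Leaf thus ?case by simp
next
  case (Node l a r)
  thus ?case by (auto simp: inner_def)
qed

lemma bst_subtree: "bst t \<Longrightarrow> v \<in> subtrees t \<Longrightarrow> bst v"
  by (induction t) auto

lemma leaf_keys_sub: "leaf_keys t \<subseteq> set_tree t"
  by (induction t) auto

lemma rep_rep: "rep a (rep b A) = rep (a * b) A"
  by (induction a) (auto simp: replicate_add)

lemma bst_T: "bst (T k r n)"
  by (simp add: bst_iff_sorted_wrt_less inorder_T)
lemma bst_opt: "k \<ge> 2 \<Longrightarrow> bst (opt k r n)"
  by (simp add: bst_iff_sorted_wrt_less inorder_opt)
lemma set_opt: "k \<ge> 2 \<Longrightarrow> set_tree (opt k r n) = set_tree (T k r n)"
  by (simp flip: set_inorder add: inorder_opt inorder_T)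

lemma good_mixed:
  fixes X :: "nat list"
  assumes b: "bst t" and ms: "mixed_stable t (rep 6 X)"
  shows "good Rm (count_list X) t"
proof (rule good_intro, intro ballI impI)
  fix v assume v: "v \<in> subtrees t" and i: "inner v"
  have bv: "bst v" using bst_subtree[OF b v] .
  obtain l a r where vv: "v = Node l a r" using i unfolding inner_def by (cases v) auto
  let ?G = "count_list X (value v) = 0 \<and> Rm (Wt (count_list X) (left v)) (Wt (count_list X) (right v))"
  have "strongly_stable_node v (rep 6 X) \<or> weakly_stable_node v (rep 6 X)"
    using ms v i unfolding mixed_stable_def by blast
  moreover
  { assume "strongly_stable_node v (rep 6 X)"
    hence ?G using node_strong[of l a r X] bv unfolding vv Rm_def by simp }
  moreover
  { assume w: "weakly_stable_left_node v (rep 6 X)"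
    then obtain ll b' lr where l: "l = Node ll b' lr" unfolding weakly_stable_left_node_def inner_def vv
      by (cases l) auto
    have ?G using w node_weak_left[of ll b' lr a r X] bv
      unfolding vv l weakly_stable_left_node_def Rm_def by simp }
  moreover
  { assume w: "weakly_stable_right_node v (rep 6 X)"
    then obtain rl b' rr where r: "r = Node rl b' rr" unfolding weakly_stable_right_node_def inner_def vv
      by (cases r) auto
    have ?G using w node_weak_right[of l a rl b' rr X] bv
      unfolding vv r weakly_stable_right_node_def Rm_def by simp }
  ultimately show ?G
    unfolding weakly_stable_node_def by blast
qed

lemma good_strong:
  fixes X :: "nat list"
  assumes b: "bst t" and ms: "strongly_stable t (rep 6 X)"
  shows "good (=) (count_list X) t"
proof (rule good_intro, intro ballI impI)
  fix v assume v: "v \<in> subtrees t" and i: "inner v"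
  have bv: "bst v" using bst_subtree[OF b v] .
  obtain l a r where vv: "v = Node l a r" using i unfolding inner_def by (cases v) auto
  have "strongly_stable_node v (rep 6 X)"
    using ms v i unfolding strongly_stable_def by blast
  thus "count_list X (value v) = 0 \<and> (Wt (count_list X) (left v)) = (Wt (count_list X) (right v))"
    using node_strong[of l a r X] bv unfolding vv by simp
qed

lemma avg_eq:
  fixes X :: "nat list"
  assumes "bst t" "bst t'" "set_tree t' = set_tree t"
  shows "avg_promotion t t' X = (real (Dt (count_list X) t) - real (Dt (count_list X) t')) / real (length X)"
proof -
  let ?c = "count_list X"
  have "avg_promotion t t' X = (\<Sum>x\<in>set_tree t. (real (?c x * depth t x) - real (?c x * depth t' x)) / real (length X))"
    unfolding avg_promotion_def freq_def by (intro sum.cong) (auto simp: field_simps)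
  also have "\<dots> = ((\<Sum>x\<in>set_tree t. real (?c x * depth t x)) - (\<Sum>x\<in>set_tree t. real (?c x * depth t' x))) / real (length X)"
    by (simp add: sum_divide_distrib[symmetric] sum_subtractf)
  also have "\<dots> = (real (Dt ?c t) - real (Dt ?c t')) / real (length X)"
    using Dt_sum[OF assms(1), of ?c] Dt_sum[OF assms(2), of ?c] assms(3) by simp
  finally show ?thesis .
qed

lemma whole_rep6:
  assumes "whole_multiple_of_atomic P X"
  shows "P (rep 6 X) \<and> X \<noteq> []"
proof -
  obtain A m where m: "m \<ge> 1" "is_atomic P X A" "X = rep m A"
    using assms unfolding whole_multiple_of_atomic_def by blast
  have "P (rep (6*m) A)" using m(1,2) unfolding is_atomic_def by simp
  moreover have "A \<noteq> []" using m(2) unfolding is_atomic_def by simp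
  ultimately show ?thesis using m(1,3) rep_rep[of 6 m A]
    by (cases m) auto
qed

theorem lemma8:
  fixes k r :: nat
  assumes "k \<ge> 2" and "r \<ge> 1"
  shows "(\<forall>X. mixed_stable (kr_tree k r) X \<and>
             whole_multiple_of_atomic (mixed_stable (kr_tree k r)) X \<longrightarrow>
           (\<exists>T'. bst T' \<and> set_tree T' = set_tree (kr_tree k r) \<and>
              avg_promotion (kr_tree k r) T' X > real k * (1 - (1 - 1 / 3 ^ k) ^ r)))
       \<and> (\<forall>X. strongly_stable (kr_tree k r) X \<and>
             whole_multiple_of_atomic (strongly_stable (kr_tree k r)) X \<longrightarrow>
           (\<exists>T' \<delta>. bst T' \<and> set_tree T' = set_tree (kr_tree k r) \<and>
              0 \<le> \<delta> \<and> \<delta> < (1 - 1 / 2 ^ k) ^ r \<and>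
              avg_promotion (kr_tree k r) T' X
                = real (k + 1) * (1 - (1 - 1 / 2 ^ k) ^ r) + \<delta>))"
proof -
  have kt: "kr_tree k r = T k r 1" by (simp add: kr_tree_def T_def)
  have k: "k \<ge> 2" using assms(1) .
  obtain r' where r': "r = Suc r'" using assms(2) by (cases r) auto
  have bT: "bst (T k r 1)" by (rule bst_T)
  have bO: "bst (opt k r 1)" using bst_opt[OF k] .
  have sO: "set_tree (opt k r 1) = set_tree (T k r 1)" using set_opt[OF k] .
  have avg: "\<And>X. avg_promotion (T k r 1) (opt k r 1) X = real_of_int (Qv k (count_list X) r 1) / real (length X)"
    by (simp only: avg_eq[OF bT bO sO] Qv_def of_int_diff of_int_of_nat_eq)
  have N: "\<And>X::nat list. set X \<subseteq> leaf_keys (T k r 1) \<Longrightarrow> Wt (count_list X) (T k r 1) = length X"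
  proof -
    fix X :: "nat list" assume "set X \<subseteq> leaf_keys (T k r 1)"
    hence "set X \<subseteq> set_tree (T k r 1)" using leaf_keys_sub[of "T k r 1"] by (rule subset_trans)
    hence "filter (\<lambda>x. x \<in> set_tree (T k r 1)) X = X" by (intro filter_True) blast
    thus "Wt (count_list X) (T k r 1) = length X" using Wt_count[OF bT, of X] by (simp only:)
  qed
  show ?thesis
  proof (intro conjI allI impI)
    fix X assume h: "mixed_stable (kr_tree k r) X \<and> whole_multiple_of_atomic (mixed_stable (kr_tree k r)) X"
    have w6: "mixed_stable (T k r 1) (rep 6 X)" "X \<noteq> []" using whole_rep6[of _ X] h unfolding kt by blast+
    have g: "good Rm (count_list X) (T k r 1)" using good_mixed[OF bT w6(1)] .
    have NX: "Wt (count_list X) (T k r 1) = length X" using N h unfolding kt mixed_stable_def by blast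
    have pos: "Wt (count_list X) (T k r 1) > 0" using NX w6(2) by simp
    have "real_of_int (Qv k (count_list X) r 1) > real k * (1 - (1 - 1/3^k)^r) * length X"
      using mixed_strict[OF k g[unfolded r'] pos[unfolded r']] NX unfolding r' by simp
    moreover have Lp: "(0::real) < real (length X)" using w6(2) by simp
    ultimately have "avg_promotion (T k r 1) (opt k r 1) X > real k * (1 - (1 - 1/3^k)^r)"
      unfolding avg by (subst pos_less_divide_eq[OF Lp])
    thus "\<exists>T'. bst T' \<and> set_tree T' = set_tree (kr_tree k r) \<and>
              avg_promotion (kr_tree k r) T' X > real k * (1 - (1 - 1 / 3 ^ k) ^ r)"
      using bO sO unfolding kt by blast
  next
    fix X assume h: "strongly_stable (kr_tree k r) X \<and> whole_multiple_of_atomic (strongly_stable (kr_tree k r)) X"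
    have w6: "strongly_stable (T k r 1) (rep 6 X)" "X \<noteq> []" using whole_rep6[of _ X] h unfolding kt by blast+
    have g: "good (=) (count_list X) (T k r 1)" using good_strong[OF bT w6(1)] .
    have NX: "Wt (count_list X) (T k r 1) = length X" using N h unfolding kt strongly_stable_def by blast
    have "real_of_int (Qv k (count_list X) r 1) = real (k+1) * (1 - (1 - 1/2^k)^r) * length X"
      using strong_main[OF k g] NX by simp
    hence e: "avg_promotion (T k r 1) (opt k r 1) X = real (k+1) * (1 - (1 - 1/2^k)^r) + 0"
      unfolding avg using w6(2) by simp
    have "(1::real) < 2^k" using k by (intro one_less_power) auto
    hence "(1::real) / 2^k < 1" by simp
    hence p2: "(0::real) < (1 - 1/2^k)^r" by simp
    show "\<exists>T' \<delta>. bst T' \<and> set_tree T' = set_tree (kr_tree k r) \<and>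
              0 \<le> \<delta> \<and> \<delta> < (1 - 1 / 2 ^ k) ^ r \<and>
              avg_promotion (kr_tree k r) T' X
                = real (k + 1) * (1 - (1 - 1 / 2 ^ k) ^ r) + \<delta>"
      unfolding kt
      apply (rule exI[of _ "opt k r 1"], rule exI[of _ "0::real"])
      using bO sO e p2 by simp
  qed
qed


end
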